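(* Let $\alpha\in(0,1)$ and let $\phi:[0,1]\to[0,\infty)$ be twice continuously differentiable on $(0,1]$ with finite constants $W>0$, $c$, $c'$ such that $(2-\alpha)Wp^{\alpha-2}+c'\le|\phi^{(2)}(p)|\le(2-\alpha)Wp^{\alpha-2}+c$ for all $p\in(0,1]$. Then for $\Delta\in(0,1]$ and positive integers $L$, $$E_L(\phi,[0,\Delta])\lesssim\Big(\frac{\Delta}{L^2}\Big)^{\alpha}.$$
   Context: $E_L(\phi,I)=\inf_{q}\sup_{x\in I}|\phi(x)-q(x)|$, the infimum over all real polynomials $q$ of degree at most $L$. $a\lesssim b$ means $a\le Cb$ for a positive constant $C$ not depending on $L,\Delta$ (possibly on $\phi,\alpha$). *)

theory Defs
  imports "HOL-Analysis.Analysis" "HOL-Computational_Algebra.Polynomial"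
begin

definition best_approx_err :: "nat \<Rightarrow> (real \<Rightarrow> real) \<Rightarrow> real set \<Rightarrow> real" where
  "best_approx_err L \<phi> I =
     (INF q \<in> {q :: real poly. degree q \<le> L}. SUP x \<in> I. \<bar>\<phi> x - poly q x\<bar>)"

end

theory Submission
  imports Defs
begin


definition cls :: "nat \<Rightarrow> (real \<Rightarrow> real) \<Rightarrow> bool" where
 "cls d g \<longleftrightarrow> (\<exists>P Q. degree P \<le> d \<and> (Q = 0 \<or> degree Q < d) \<and>
     (\<forall>t. g t = poly P (cos t) + sin t * poly Q (cos t)))"

lemma cls_const: "cls d (\<lambda>_. c)"
  unfolding cls_def by (rule exI[of _ "[:c:]"], rule exI[of _ 0]) auto

lemma cls_mono: assumes "cls d g" "d \<le> e" shows "cls e g"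
proof -
  obtain P1 Q1 where 1: "degree P1 \<le> d" "Q1 = 0 \<or> degree Q1 < d"
    "\<forall>t. g t = poly P1 (cos t) + sin t * poly Q1 (cos t)" using assms(1) cls_def by auto
  have "degree P1 \<le> e" "Q1 = 0 \<or> degree Q1 < e" using 1 assms(2) by auto
  then show ?thesis using 1(3) unfolding cls_def by blast
qed

lemma cls_add: assumes "cls d g" "cls d h" shows "cls d (\<lambda>t. g t + h t)"
proof -
  obtain P1 Q1 where 1: "degree P1 \<le> d" "Q1 = 0 \<or> degree Q1 < d"
    "\<forall>t. g t = poly P1 (cos t) + sin t * poly Q1 (cos t)" using assms(1) cls_def by auto
  obtain P2 Q2 where 2: "degree P2 \<le> d" "Q2 = 0 \<or> degree Q2 < d"
    "\<forall>t. h t = poly P2 (cos t) + sin t * poly Q2 (cos t)" using assms(2) cls_def by auto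
  have "degree (P1 + P2) \<le> d" using 1 2 degree_add_le by blast
  moreover have "Q1 + Q2 = 0 \<or> degree (Q1 + Q2) < d"
  proof (cases "Q1 = 0 \<and> Q2 = 0")
    case True then show ?thesis by simp
  next
    case False
    then have "d > 0" using 1 2 by auto
    then have "degree Q1 < d" "degree Q2 < d" using 1 2 by auto
    then show ?thesis using degree_add_le by (metis le_less_trans max.strict_boundedE max_def order.refl degree_add_le_max)
  qed
  moreover have "\<forall>t. g t + h t = poly (P1 + P2) (cos t) + sin t * poly (Q1 + Q2) (cos t)"
    using 1 2 by (simp add: algebra_simps)
  ultimately show ?thesis unfolding cls_def by blast
qed

lemma cls_scale: assumes "cls d g" shows "cls d (\<lambda>t. c * g t)"
proof -
  obtain P1 Q1 where 1: "degree P1 \<le> d" "Q1 = 0 \<or> degree Q1 < d"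
    "\<forall>t. g t = poly P1 (cos t) + sin t * poly Q1 (cos t)" using assms(1) cls_def by auto
  have "degree (smult c P1) \<le> d" using 1 by (meson degree_smult_le le_trans)
  moreover have "smult c Q1 = 0 \<or> degree (smult c Q1) < d"
    using 1 by (metis degree_smult_le le_less_trans smult_0_right)
  moreover have "\<forall>t. c * g t = poly (smult c P1) (cos t) + sin t * poly (smult c Q1) (cos t)"
    using 1 by (simp add: algebra_simps)
  ultimately show ?thesis unfolding cls_def by blast
qed

lemma cls_mult: assumes "cls d g" "cls e h" shows "cls (d + e) (\<lambda>t. g t * h t)"
proof -
  obtain P1 Q1 where 1: "degree P1 \<le> d" "Q1 = 0 \<or> degree Q1 < d"
    "\<forall>t. g t = poly P1 (cos t) + sin t * poly Q1 (cos t)" using assms(1) cls_def by auto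
  obtain P2 Q2 where 2: "degree P2 \<le> e" "Q2 = 0 \<or> degree Q2 < e"
    "\<forall>t. h t = poly P2 (cos t) + sin t * poly Q2 (cos t)" using assms(2) cls_def by auto
  define P where "P = P1 * P2 + [:1,0,-1:] * (Q1 * Q2)"
  define Q where "Q = P1 * Q2 + Q1 * P2"
  have dP1: "degree (P1 * P2) \<le> d + e" using 1 2 by (meson add_mono degree_mult_le le_trans)
  have dP2: "degree ([:1,0,-1:] * (Q1 * Q2)) \<le> d + e"
  proof (cases "Q1 = 0 \<or> Q2 = 0")
    case True then show ?thesis by auto
  next
    case False
    then have "degree Q1 < d" "degree Q2 < e" using 1 2 by auto
    moreover have "degree ([:1,0,-1:] * (Q1 * Q2)) \<le> 2 + (degree Q1 + degree Q2)"
    proof -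
      have "degree ([:1,0,-1:] * (Q1 * Q2)) \<le> degree [:1::real,0,-1:] + degree (Q1 * Q2)"
        by (rule degree_mult_le)
      moreover have "degree (Q1 * Q2) \<le> degree Q1 + degree Q2" by (rule degree_mult_le)
      ultimately show ?thesis by simp
    qed
    ultimately show ?thesis by linarith
  qed
  have "degree P \<le> d + e" unfolding P_def using dP1 dP2 degree_add_le by blast
  moreover have "Q = 0 \<or> degree Q < d + e"
  proof (cases "Q1 = 0 \<and> Q2 = 0")
    case True then show ?thesis by (simp add: Q_def)
  next
    case False
    have a: "degree (P1 * Q2) < d + e \<or> P1 * Q2 = 0"
    proof (cases "Q2 = 0")
      case False then have "degree Q2 < e" using 2 by auto
      then show ?thesis using 1 by (meson add_le_less_mono degree_mult_le le_less_trans)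
    qed simp
    have b: "degree (Q1 * P2) < d + e \<or> Q1 * P2 = 0"
    proof (cases "Q1 = 0")
      case False then have "degree Q1 < d" using 1 by auto
      then show ?thesis using 2 by (meson add_less_le_mono degree_mult_le le_less_trans)
    qed simp
    have "d + e > 0" using False 1 2 by auto
    then have "degree (P1 * Q2) < d + e" "degree (Q1 * P2) < d + e" using a b by auto
    then show ?thesis unfolding Q_def
      by (metis degree_add_le_max le_less_trans max.strict_boundedE max_def order.refl)
  qed
  moreover have "\<forall>t. g t * h t = poly P (cos t) + sin t * poly Q (cos t)"
  proof
    fix t :: real
    have s: "sin t * sin t = 1 - cos t * cos t" using sin_cos_squared_add[of t] by (simp add: power2_eq_square)
    have s2: "\<And>X. cos t * (cos t * X) + sin t * (sin t * X) = X"
    proof -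
      fix X :: real
      have e: "cos t * cos t + sin t * sin t = 1" using sin_cos_squared_add[of t] by (simp add: power2_eq_square)
      have "cos t * (cos t * X) + sin t * (sin t * X) = (cos t * cos t + sin t * sin t) * X"
        by (simp only: distrib_right mult.assoc)
      then show "cos t * (cos t * X) + sin t * (sin t * X) = X" using e by simp
    qed
    show "g t * h t = poly P (cos t) + sin t * poly Q (cos t)"
      using 1 2 unfolding P_def Q_def by (simp add: algebra_simps s[symmetric]) (simp add: s2)
  qed
  ultimately show ?thesis unfolding cls_def by blast
qed

lemma cls_sum: "finite S \<Longrightarrow> (\<And>i. i \<in> S \<Longrightarrow> cls d (g i)) \<Longrightarrow> cls d (\<lambda>t. \<Sum>i\<in>S. g i t)"
proof (induction S rule: finite_induct)
  case empty then show ?case using cls_const[of d 0] by simp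
next
  case (insert x F) then show ?case using cls_add[of d "g x" "\<lambda>t. \<Sum>i\<in>F. g i t"] by simp
qed

lemma cls_cos_sin: "cls k (\<lambda>t. cos (real k * t)) \<and> cls k (\<lambda>t. sin (real k * t))"
proof (induction k)
  case 0 then show ?case using cls_const[of 0 1] cls_const[of 0 0] by simp
next
  case (Suc k)
  have c1: "cls 1 cos" unfolding cls_def
    by (rule exI[of _ "[:0,1:]"], rule exI[of _ 0]) auto
  have s1: "cls 1 sin" unfolding cls_def
    by (rule exI[of _ 0], rule exI[of _ 1]) auto
  have e1: "cos (real (Suc k) * t) = cos (real k * t) * cos t + (- 1) * (sin (real k * t) * sin t)" for t
    by (simp add: distrib_right cos_add)
  have e2: "sin (real (Suc k) * t) = sin (real k * t) * cos t + cos (real k * t) * sin t" for t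
    by (simp add: distrib_right sin_add)
  have "cls (k + 1) (\<lambda>t. cos (real k * t) * cos t)" "cls (k+1) (\<lambda>t. sin (real k * t) * sin t)"
       "cls (k + 1) (\<lambda>t. sin (real k * t) * cos t)" "cls (k+1) (\<lambda>t. cos (real k * t) * sin t)"
    using Suc cls_mult c1 s1 by blast+
  then show ?case unfolding e1 e2 by (intro conjI cls_add cls_scale) auto
qed

lemma cls_cos_shift: "cls k (\<lambda>t. cos (real k * (t - a)))"
proof -
  have e: "cos (real k * (t - a)) = cos (real k * a) * cos (real k * t) + sin (real k * a) * sin (real k * t)" for t
    by (simp add: right_diff_distrib cos_diff)
  show ?thesis unfolding e using cls_cos_sin cls_add cls_scale by blast
qed

lemma cls_sin_shift: "cls k (\<lambda>t. sin (real k * (t - a)))"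
proof -
  have e: "sin (real k * (t - a)) = cos (real k * a) * sin (real k * t) + (- sin (real k * a)) * cos (real k * t)" for t
    by (simp add: right_diff_distrib sin_diff)
  show ?thesis unfolding e using cls_cos_sin cls_add cls_scale by blast
qed


definition tn :: "nat \<Rightarrow> nat \<Rightarrow> real" where "tn N j = 2 * pi * real j / real N"
definition Dk :: "nat \<Rightarrow> real \<Rightarrow> complex" where "Dk m v = (\<Sum>k<m. cis (real k * v))"
definition Kr :: "nat \<Rightarrow> real \<Rightarrow> real" where "Kr m v = cmod (Dk m v) ^ 4"

lemma cis_eq_1_imp: assumes "cis x = 1" shows "\<exists>n::int. x = 2 * pi * of_int n"
proof -
  have "cos x = 1" "sin x = 0" using arg_cong[OF assms, of Re] arg_cong[OF assms, of Im] by simp_all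
  then have "sin x = sin 0 \<and> cos x = cos 0" by simp
  then obtain n :: int where "x = 0 + 2 * pi * of_int n" using sin_cos_eq_iff by blast
  then show ?thesis by auto
qed

lemma root_sum:
  fixes s :: real
  assumes N: "0 < N" and sI: "s \<in> \<int>" and s: "\<bar>s\<bar> < real N"
  shows "(\<Sum>j<N. cis (s * (\<theta> - tn N j))) = (if s = 0 then of_nat N else 0)"
proof (cases "s = 0")
  case True then show ?thesis by simp
next
  case False
  obtain k :: int where sk: "s = of_int k" using sI Ints_cases by blast
  define z where "z = cis (- 2 * pi * s / real N)"
  have e: "cis (s * (\<theta> - tn N j)) = cis (s * \<theta>) * z ^ j" for j
    unfolding z_def Complex.DeMoivre cis_mult tn_def
    by (rule arg_cong[where f = cis]) (simp add: field_simps)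
  have zN: "z ^ N = 1"
  proof -
    have "z ^ N = cis (2 * pi * of_int (- k))" unfolding z_def Complex.DeMoivre using N
      by (simp add: sk)
    also have "\<dots> = 1" by (rule cis_multiple_2pi) simp
    finally show ?thesis .
  qed
  have z1: "z \<noteq> 1"
  proof
    assume "z = 1"
    then obtain n :: int where n: "- 2 * pi * s / real N = 2 * pi * of_int n"
      unfolding z_def using cis_eq_1_imp by blast
    then have "pi * (- s) = pi * (real N * of_int n)" using N by (simp add: field_simps)
    then have "- s = real N * of_int n" by (metis mult_left_cancel pi_neq_zero)
    then have kn: "- k = int N * n" using sk by (metis of_int_eq_iff of_int_minus of_int_mult of_int_of_nat_eq)
    have k0: "k \<noteq> 0" using False sk by simp
    have kl: "\<bar>k\<bar> < int N" using s sk by linarith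
    have n0: "n \<noteq> 0" using kn k0 by auto
    have "\<bar>k\<bar> = int N * \<bar>n\<bar>" using arg_cong[OF kn, of abs] by (simp add: abs_mult)
    moreover have "int N * 1 \<le> int N * \<bar>n\<bar>" using n0 by (intro mult_left_mono) auto
    ultimately show False using kl by linarith
  qed
  have "(\<Sum>j<N. cis (s * (\<theta> - tn N j))) = cis (s * \<theta>) * (\<Sum>j<N. z ^ j)"
    unfolding e by (simp add: sum_distrib_left)
  also have "(\<Sum>j<N. z ^ j) = 0" using sum_gp_strict[of z N] zN z1 by simp
  finally show ?thesis using False by simp
qed

lemma prod_sum_cis:
  "(\<Sum>x\<in>X. cis (f x * v)) * (\<Sum>y\<in>Y. cis (g y * v)) = (\<Sum>z\<in>X \<times> Y. cis ((f (fst z) + g (snd z)) * v))"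
  by (simp add: sum_product sum.cartesian_product cis_mult distrib_right case_prod_beta)

definition S4 :: "nat \<Rightarrow> ((nat \<times> nat) \<times> (nat \<times> nat)) set" where
  "S4 m = ({..<m} \<times> {..<m}) \<times> ({..<m} \<times> {..<m})"
definition s4 :: "(nat \<times> nat) \<times> (nat \<times> nat) \<Rightarrow> real" where
  "s4 z = (real (fst (fst z)) + real (snd (fst z))) + (- real (fst (snd z)) + - real (snd (snd z)))"

lemma Dk_cnj: "cnj (Dk m v) = (\<Sum>k<m. cis (- real k * v))"
  unfolding Dk_def by (simp add: cis_cnj)

lemma Kr_cis: "complex_of_real (Kr m v) = (\<Sum>z\<in>S4 m. cis (s4 z * v))"
proof -
  have "complex_of_real (Kr m v) = complex_of_real ((cmod (Dk m v))^2) ^ 2"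
    unfolding Kr_def by simp
  also have "\<dots> = (Dk m v * Dk m v) * (cnj (Dk m v) * cnj (Dk m v))"
    unfolding complex_norm_square by (simp add: power2_eq_square algebra_simps)
  also have "\<dots> = (\<Sum>z\<in>S4 m. cis (s4 z * v))"
    unfolding Dk_cnj unfolding Dk_def prod_sum_cis S4_def s4_def by simp
  finally show ?thesis .
qed

lemma s4_props: assumes "z \<in> S4 m" shows "s4 z \<in> \<int>" "\<bar>s4 z\<bar> \<le> 2 * real m - 2"
proof -
  show "s4 z \<in> \<int>" unfolding s4_def by (intro Ints_add Ints_minus Ints_of_nat)
  have "fst (fst z) < m" "snd (fst z) < m" "fst (snd z) < m" "snd (snd z) < m"
    using assms unfolding S4_def by auto
  moreover have h: "\<And>a::nat. a < m \<Longrightarrow> real a \<le> real m - 1"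
  proof -
    fix a :: nat assume "a < m"
    then have "a + 1 \<le> m" by simp
    then have "real (a + 1) \<le> real m" by (simp only: of_nat_le_iff)
    then show "real a \<le> real m - 1" by simp
  qed
  ultimately have "real (fst (fst z)) \<le> real m - 1" "real (snd (fst z)) \<le> real m - 1"
     "real (fst (snd z)) \<le> real m - 1" "real (snd (snd z)) \<le> real m - 1"
    using h by auto
  then show "\<bar>s4 z\<bar> \<le> 2 * real m - 2" unfolding s4_def by auto
qed

lemma sum_Kr: assumes m: "0 < m" and N: "2 * m \<le> N"
  shows "(\<Sum>j<N. Kr m (\<theta> - tn N j)) = (\<Sum>z\<in>S4 m. if s4 z = 0 then real N else 0)"
proof -
  have N0: "0 < N" using m N by linarith
  have "complex_of_real (\<Sum>j<N. Kr m (\<theta> - tn N j)) = (\<Sum>j<N. \<Sum>z\<in>S4 m. cis (s4 z * (\<theta> - tn N j)))"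
    by (simp add: Kr_cis)
  also have "\<dots> = (\<Sum>z\<in>S4 m. \<Sum>j<N. cis (s4 z * (\<theta> - tn N j)))" by (rule sum.swap)
  also have "\<dots> = (\<Sum>z\<in>S4 m. if s4 z = 0 then of_nat N else 0)"
  proof (rule sum.cong[OF refl])
    fix z assume z: "z \<in> S4 m"
    have "\<bar>s4 z\<bar> < real N" using s4_props(2)[OF z] N by linarith
    then show "(\<Sum>j<N. cis (s4 z * (\<theta> - tn N j))) = (if s4 z = 0 then of_nat N else 0)"
      by (rule root_sum[OF N0 s4_props(1)[OF z]])
  qed
  also have "\<dots> = complex_of_real (\<Sum>z\<in>S4 m. if s4 z = 0 then real N else 0)"
    by (auto simp: of_real_sum intro!: sum.cong)
  finally show ?thesis using of_real_eq_iff by blast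
qed

lemma sum_Kr_sin: assumes m: "0 < m" and N: "2 * m \<le> N"
  shows "(\<Sum>j<N. Kr m (\<theta> - tn N j) * sin (\<theta> - tn N j)) = 0"
proof -
  have N0: "0 < N" using m N by linarith
  have e: "complex_of_real (Kr m v) * cis v = (\<Sum>z\<in>S4 m. cis ((s4 z + 1) * v))" for v
    unfolding Kr_cis by (simp add: sum_distrib_right cis_mult distrib_right)
  have "(\<Sum>j<N. complex_of_real (Kr m (\<theta> - tn N j)) * cis (\<theta> - tn N j))
      = (\<Sum>j<N. \<Sum>z\<in>S4 m. cis ((s4 z + 1) * (\<theta> - tn N j)))" by (simp add: e)
  also have "\<dots> = (\<Sum>z\<in>S4 m. \<Sum>j<N. cis ((s4 z + 1) * (\<theta> - tn N j)))" by (rule sum.swap)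
  also have "\<dots> = (\<Sum>z\<in>S4 m. if s4 z + 1 = 0 then of_nat N else 0)"
  proof (rule sum.cong[OF refl])
    fix z assume z: "z \<in> S4 m"
    have "s4 z + 1 \<in> \<int>" using s4_props(1)[OF z] by simp
    moreover have "\<bar>s4 z + 1\<bar> < real N" using s4_props(2)[OF z] N by linarith
    ultimately show "(\<Sum>j<N. cis ((s4 z + 1) * (\<theta> - tn N j))) = (if s4 z + 1 = 0 then of_nat N else 0)"
      by (rule root_sum[OF N0])
  qed
  finally have "Im (\<Sum>j<N. complex_of_real (Kr m (\<theta> - tn N j)) * cis (\<theta> - tn N j)) = 0"
    by (simp add: if_distrib cong: if_cong)
  then show ?thesis by simp
qed

lemma sum_D2: assumes m: "0 < m" and N: "m \<le> N"
  shows "(\<Sum>j<N. cmod (Dk m (\<theta> - tn N j)) ^ 2) = real N * real m"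
proof -
  have N0: "0 < N" using m N by linarith
  have e: "complex_of_real (cmod (Dk m v) ^ 2) = (\<Sum>z\<in>{..<m}\<times>{..<m}. cis ((real (fst z) + - real (snd z)) * v))" for v
    unfolding complex_norm_square Dk_cnj unfolding Dk_def prod_sum_cis by simp
  have "complex_of_real (\<Sum>j<N. cmod (Dk m (\<theta> - tn N j)) ^ 2)
      = (\<Sum>j<N. \<Sum>z\<in>{..<m}\<times>{..<m}. cis ((real (fst z) + - real (snd z)) * (\<theta> - tn N j)))" by (simp only: of_real_sum e)
  also have "\<dots> = (\<Sum>z\<in>{..<m}\<times>{..<m}. \<Sum>j<N. cis ((real (fst z) + - real (snd z)) * (\<theta> - tn N j)))"
    by (rule sum.swap)
  also have "\<dots> = (\<Sum>z\<in>{..<m}\<times>{..<m}. if fst z = snd z then of_nat N else 0)"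
  proof (rule sum.cong[OF refl])
    fix z assume z: "z \<in> {..<m}\<times>{..<m}"
    have "real (fst z) + - real (snd z) \<in> \<int>" by (intro Ints_add Ints_minus Ints_of_nat)
    moreover have "\<bar>real (fst z) + - real (snd z)\<bar> < real N" using z N by auto
    ultimately have "(\<Sum>j<N. cis ((real (fst z) + - real (snd z)) * (\<theta> - tn N j)))
       = (if real (fst z) + - real (snd z) = 0 then of_nat N else 0)"
      by (rule root_sum[OF N0])
    then show "(\<Sum>j<N. cis ((real (fst z) + - real (snd z)) * (\<theta> - tn N j))) = (if fst z = snd z then of_nat N else 0)"
      by simp
  qed
  also have "\<dots> = (\<Sum>(a,b)\<in>{..<m}\<times>{..<m}. if a = b then of_nat N else 0)"
    by (simp add: case_prod_beta)
  also have "\<dots> = (\<Sum>a<m. \<Sum>b<m. if a = b then of_nat N else 0)"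
    by (rule sum.cartesian_product[symmetric])
  also have "\<dots> = (\<Sum>a<m. of_nat N)"
    by (intro sum.cong refl) (simp add: sum.delta)
  also have "\<dots> = complex_of_real (real N * real m)" by simp
  finally show ?thesis using of_real_eq_iff by blast
qed

lemma Kr_nonneg: "0 \<le> Kr m v" unfolding Kr_def by simp

lemma Kr_zero: "Kr m 0 = real m ^ 4" unfolding Kr_def Dk_def by simp

lemma Dk_tele: "Dk m v * (cis v - 1) = cis (real m * v) - 1"
proof -
  have "Dk m v = (\<Sum>k<m. cis v ^ k)" unfolding Dk_def Complex.DeMoivre by simp
  then show ?thesis using power_diff_1_eq[of "cis v" m] by (simp add: Complex.DeMoivre mult.commute)
qed

lemma cmod_cis_1: "cmod (cis v - 1) ^ 2 = 4 * sin (v / 2) ^ 2"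
proof -
  have "cmod (cis v - 1) ^ 2 = (cos v - 1)^2 + sin v ^ 2" by (simp add: cmod_power2)
  also have "\<dots> = 2 - 2 * cos v" using sin_cos_squared_add[of v] by (simp add: power2_eq_square algebra_simps)
  also have "cos v = 1 - 2 * sin (v/2) ^ 2" using cos_double_sin[of "v/2"] by simp
  finally show ?thesis by simp
qed

lemma Kr_sin: "Kr m v * sin (v / 2) ^ 2 \<le> cmod (Dk m v) ^ 2"
proof -
  have "cmod (Dk m v) ^ 2 * (4 * sin (v / 2) ^ 2) = cmod (Dk m v * (cis v - 1)) ^ 2"
    by (simp add: norm_mult power_mult_distrib cmod_cis_1)
  also have "\<dots> = cmod (cis (real m * v) - 1) ^ 2" by (simp add: Dk_tele)
  also have "\<dots> \<le> 2 ^ 2"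
  proof -
    have "cmod (cis (real m * v) - 1) \<le> 2"
      using norm_triangle_ineq4[of "cis (real m * v)" 1] by simp
    then show ?thesis by (intro power_mono) auto
  qed
  finally have a: "cmod (Dk m v) ^ 2 * sin (v / 2) ^ 2 \<le> 1" by simp
  have "Kr m v * sin (v / 2) ^ 2 = cmod (Dk m v) ^ 2 * (cmod (Dk m v) ^ 2 * sin (v / 2) ^ 2)"
    unfolding Kr_def by (simp add: power_mult[symmetric] mult.assoc[symmetric] power_add[symmetric])
  also have "\<dots> \<le> cmod (Dk m v) ^ 2 * 1" by (rule mult_left_mono[OF a]) simp
  finally show ?thesis by simp
qed

lemma Kr_poly_form: "Kr m v = ((\<Sum>k<m. cos (real k * v))^2 + (\<Sum>k<m. sin (real k * v))^2)^2"
proof -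
  have a: "cmod (Dk m v) ^ 2 = (\<Sum>k<m. cos (real k * v))^2 + (\<Sum>k<m. sin (real k * v))^2"
    unfolding cmod_power2 Dk_def by simp
  have "Kr m v = (cmod (Dk m v) ^ 2) ^ 2" unfolding Kr_def by (simp add: power4_eq_xxxx power2_eq_square mult.assoc)
  then show ?thesis using a by simp
qed


lemma mvt_any:
  fixes f f' :: "real \<Rightarrow> real"
  assumes d: "\<And>x. DERIV f x :> f' x"
  shows "\<exists>z. \<bar>z - a\<bar> \<le> \<bar>b - a\<bar> \<and> f b - f a = (b - a) * f' z"
proof (cases a b rule: linorder_cases)
  case less
  then obtain z where "a < z" "z < b" "f b - f a = (b - a) * f' z" using MVT2[of a b f f'] d by blast
  then show ?thesis by (intro exI[of _ z]) auto
next
  case equal then show ?thesis by (intro exI[of _ a]) auto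
next
  case greater
  then obtain z where z: "b < z" "z < a" "f a - f b = (a - b) * f' z" using MVT2[of b a f f'] d by blast
  have "(b - a) * f' z = - ((a - b) * f' z)" by (simp add: algebra_simps)
  then show ?thesis using z by (intro exI[of _ z]) auto
qed

lemma lip_deriv:
  fixes f f' :: "real \<Rightarrow> real"
  assumes d: "\<And>x. DERIV f x :> f' x" and b: "\<And>x. \<bar>f' x\<bar> \<le> M"
  shows "\<bar>f b - f a\<bar> \<le> M * \<bar>b - a\<bar>"
proof -
  obtain z where "f b - f a = (b - a) * f' z" using mvt_any[OF d] by blast
  then have "\<bar>f b - f a\<bar> = \<bar>b - a\<bar> * \<bar>f' z\<bar>" by (simp add: abs_mult)
  also have "\<dots> \<le> \<bar>b - a\<bar> * M" by (rule mult_left_mono[OF b]) simp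
  finally show ?thesis by (simp add: mult.commute)
qed

lemma taylor2:
  fixes f f1 f2 :: "real \<Rightarrow> real"
  assumes d1: "\<And>x. DERIV f x :> f1 x" and d2: "\<And>x. DERIV f1 x :> f2 x" and b: "\<And>x. \<bar>f2 x\<bar> \<le> M"
  shows "\<bar>f (a + u) - f a - f1 a * u\<bar> \<le> M * u^2"
proof -
  obtain z where z: "\<bar>z - a\<bar> \<le> \<bar>u\<bar>" "f (a+u) - f a = u * f1 z" using mvt_any[OF d1, of a "a+u"] by auto
  have l: "\<bar>f1 z - f1 a\<bar> \<le> M * \<bar>z - a\<bar>" by (rule lip_deriv[OF d2 b])
  have M: "M \<ge> 0" using b[of 0] by linarith
  have "\<bar>f (a + u) - f a - f1 a * u\<bar> = \<bar>u\<bar> * \<bar>f1 z - f1 a\<bar>"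
    using z(2) by (simp add: abs_mult[symmetric] algebra_simps)
  also have "\<dots> \<le> \<bar>u\<bar> * (M * \<bar>u\<bar>)"
  proof -
    have "M * \<bar>z - a\<bar> \<le> M * \<bar>u\<bar>" using z(1) M by (rule mult_left_mono)
    then have "\<bar>f1 z - f1 a\<bar> \<le> M * \<bar>u\<bar>" using l by linarith
    then show ?thesis by (rule mult_left_mono) simp
  qed
  also have "\<dots> = M * u^2" by (simp add: power2_eq_square abs_mult_self algebra_simps)
  finally show ?thesis .
qed

lemma one_minus_cos_le: "\<bar>1 - cos z\<bar> \<le> \<bar>z\<bar>" for z :: real
proof -
  have e: "1 - cos z = 2 * sin (z/2) ^ 2" using cos_double_sin[of "z/2"] by simp
  have "sin (z/2) ^ 2 = \<bar>sin (z/2)\<bar> * \<bar>sin (z/2)\<bar>" by (simp add: power2_eq_square)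
  also have "\<dots> \<le> \<bar>sin (z/2)\<bar> * 1" by (intro mult_left_mono abs_sin_le_one) simp
  also have "\<dots> \<le> \<bar>z/2\<bar>" using abs_sin_x_le_abs_x[of "z/2"] by simp
  finally show ?thesis unfolding e by simp
qed

lemma u_sin: "\<bar>u - sin u\<bar> \<le> u^2" for u :: real
proof -
  have d: "\<And>x. DERIV (\<lambda>x. x - sin x) x :> 1 - cos x" by (auto intro!: derivative_eq_intros)
  obtain z where z: "\<bar>z - 0\<bar> \<le> \<bar>u - 0\<bar>" "(u - sin u) - (0 - sin 0) = (u - 0) * (1 - cos z)"
    using mvt_any[OF d, of 0 u] by blast
  have "\<bar>u - sin u\<bar> = \<bar>u\<bar> * \<bar>1 - cos z\<bar>" using z(2) by (simp add: abs_mult)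
  also have "\<dots> \<le> \<bar>u\<bar> * \<bar>u\<bar>" using one_minus_cos_le[of z] z(1) by (intro mult_left_mono) auto
  finally show ?thesis by (simp add: power2_eq_square)
qed

lemma sin_lower: fixes x :: real assumes "0 \<le> x" "x \<le> pi/2" shows "x/3 \<le> sin x"
proof -
  define g where "g x = sin x - x + x^3/6" for x :: real
  have "g 0 \<le> g x"
  proof (rule DERIV_nonneg_imp_nondecreasing[OF assms(1)])
    fix t assume "0 \<le> t" "t \<le> x"
    have "DERIV g t :> cos t - 1 + t^2/2" unfolding g_def
      by (auto intro!: derivative_eq_intros simp: power2_eq_square)
    moreover have "0 \<le> cos t - 1 + t^2/2"
    proof -
      have e: "1 - cos t = 2 * sin (t/2) ^ 2" using cos_double_sin[of "t/2"] by simp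
      have "\<bar>sin (t/2)\<bar> \<le> \<bar>t/2\<bar>" by (rule abs_sin_x_le_abs_x)
      then have "sin (t/2) ^ 2 \<le> (t/2)^2" by (metis power2_abs abs_ge_zero power_mono)
      then show ?thesis using e by (simp add: power2_eq_square)
    qed
    ultimately show "\<exists>y. DERIV g t :> y \<and> 0 \<le> y" by blast
  qed
  then have a: "x - x^3/6 \<le> sin x" unfolding g_def by simp
  have "x \<le> 2" using assms pi_less_4 by linarith
  then have "x^2 \<le> 2^2" using assms(1) by (intro power_mono) auto
  then have "x^2 \<le> 4" by simp
  then have "x * x^2 \<le> x * 4" using assms(1) by (rule mult_left_mono)
  then have "x^3/6 \<le> 2*x/3" by (simp add: power3_eq_cube power2_eq_square)
  then show ?thesis using a by linarith
qed

lemma u_sq_sin: assumes "\<bar>u\<bar> \<le> pi" shows "u^2 \<le> 36 * sin (u/2)^2"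
proof -
  define v where "v = \<bar>u\<bar>/2"
  have v: "0 \<le> v" "v \<le> pi/2" using assms unfolding v_def by auto
  have s: "v/3 \<le> sin v" by (rule sin_lower[OF v])
  have "sin v ^ 2 = sin (u/2) ^ 2"
    unfolding v_def by (cases "u \<ge> 0") (auto simp: abs_if)
  moreover have "(v/3)^2 \<le> sin v ^ 2" using s v by (intro power_mono) auto
  moreover have "u^2 = 36 * (v/3)^2" unfolding v_def by (simp add: power2_eq_square abs_mult_self)
  ultimately show ?thesis by linarith
qed

lemma rep: "\<exists>u' (k::int). \<bar>u'\<bar> \<le> pi \<and> u = u' + 2 * pi * of_int k"
proof -
  define k where "k = \<lfloor>u / (2*pi) + 1/2\<rfloor>"
  have a: "of_int k \<le> u / (2*pi) + 1/2" "u / (2*pi) + 1/2 < of_int k + 1"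
    unfolding k_def using floor_correct[of "u / (2*pi) + 1/2"] by auto
  have b: "2 * pi * of_int k \<le> u + pi" using a(1) pi_gt_zero by (simp add: field_simps)
  have c: "u - pi < 2 * pi * of_int k" using a(2) pi_gt_zero by (simp add: field_simps)
  show ?thesis by (rule exI[of _ "u - 2 * pi * of_int k"], rule exI[of _ k]) (use b c in auto)
qed

lemma cos_per: "cos (x + 2 * pi * of_int (k::int)) = cos x"
  by (simp add: cos_add)
lemma sin_per: "sin (x + 2 * pi * of_int (k::int)) = sin x"
  by (simp add: sin_add)
lemma sin_half_per: "sin ((x + 2 * pi * of_int (k::int)) / 2) ^ 2 = sin (x/2) ^ 2"
proof -
  have e: "(x + 2 * pi * of_int k) / 2 = x/2 + pi * of_int k" by simp
  have "cos (pi * of_int k) ^ 2 = 1" using sin_cos_squared_add[of "pi * of_int k"] by simp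
  then show ?thesis unfolding e sin_add by (simp add: power_mult_distrib)
qed

lemma powr_subadd:
  fixes a b \<alpha> :: real
  assumes "0 \<le> a" "0 \<le> b" "0 < \<alpha>" "\<alpha> \<le> 1"
  shows "(a + b) powr \<alpha> \<le> a powr \<alpha> + b powr \<alpha>"
proof (cases "a = 0 \<or> b = 0")
  case True then show ?thesis by auto
next
  case False
  then have ab: "0 < a" "0 < b" using assms by auto
  have e: "x powr \<alpha> = x * x powr (\<alpha> - 1)" if "0 < x" for x :: real
    using powr_mult_base[of x "\<alpha> - 1"] that by simp
  have "a * (a + b) powr (\<alpha> - 1) \<le> a * a powr (\<alpha> - 1)"
    using ab assms by (intro mult_left_mono powr_mono2') auto
  moreover have "b * (a + b) powr (\<alpha> - 1) \<le> b * b powr (\<alpha> - 1)"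
    using ab assms by (intro mult_left_mono powr_mono2') auto
  ultimately have "a * (a + b) powr (\<alpha> - 1) + b * (a + b) powr (\<alpha> - 1) \<le> a * a powr (\<alpha> - 1) + b * b powr (\<alpha> - 1)"
    by (rule add_mono)
  then have "(a + b) * (a + b) powr (\<alpha> - 1) \<le> a powr \<alpha> + b powr \<alpha>"
    using e[OF ab(1)] e[OF ab(2)] by (simp only: distrib_right)
  then show ?thesis using e[of "a+b"] ab by simp
qed

locale phi_setup =
  fixes \<alpha> A :: real and \<phi> \<phi>' \<phi>'' :: "real \<Rightarrow> real"
  assumes alpha: "0 < \<alpha>" "\<alpha> < 1" and A: "A > 0"
  and cont: "continuous_on {0..1} \<phi>"
  and d1: "\<forall>p\<in>{0<..1}. (\<phi> has_real_derivative \<phi>' p) (at p within {0<..1})"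
  and d2: "\<forall>p\<in>{0<..1}. (\<phi>' has_real_derivative \<phi>'' p) (at p within {0<..1})"
  and b2: "\<forall>p\<in>{0<..1}. \<bar>\<phi>'' p\<bar> \<le> A * p powr (\<alpha> - 2)"
begin

definition "B = \<bar>\<phi>' 1\<bar> + A / (1 - \<alpha>)"
definition "K = B / \<alpha>"

lemma B_pos: "B > 0" unfolding B_def using A alpha by (simp add: add_nonneg_pos)
lemma K_pos: "K > 0" unfolding K_def using B_pos alpha by simp

lemma d1_at: assumes "0 < p" "p < 1" shows "(\<phi> has_real_derivative \<phi>' p) (at p)"
proof -
  have "(\<phi> has_real_derivative \<phi>' p) (at p within {0<..<1})"
    by (rule DERIV_subset[of _ _ _ "{0<..1}"]) (use d1 assms in auto)
  then show ?thesis using at_within_open[of p "{0<..<1::real}"] assms by auto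
qed

lemma d2_at: assumes "0 < p" "p < 1" shows "(\<phi>' has_real_derivative \<phi>'' p) (at p)"
proof -
  have "(\<phi>' has_real_derivative \<phi>'' p) (at p within {0<..<1})"
    by (rule DERIV_subset[of _ _ _ "{0<..1}"]) (use d2 assms in auto)
  then show ?thesis using at_within_open[of p "{0<..<1::real}"] assms by auto
qed

lemma phi'_cont: assumes "0 < p" shows "continuous_on {p..1} \<phi>'"
proof -
  have "continuous (at x within {p..1}) \<phi>'" if "x \<in> {p..1}" for x
  proof -
    have "continuous (at x within {0<..1}) \<phi>'" using d2 that assms by (intro DERIV_continuous) auto
    then show ?thesis by (rule continuous_within_subset) (use assms in auto)
  qed
  then show ?thesis using continuous_on_eq_continuous_within by blast
qed

lemma powr_ge1: fixes p e :: real assumes "0 < p" "p \<le> 1" "e \<le> 0" shows "1 \<le> p powr e"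
proof -
  have "p powr 0 \<le> p powr e" using powr_mono'[of e 0 p] assms by simp
  then show ?thesis using assms by simp
qed

lemma phi'_bound: assumes p: "0 < p" "p \<le> 1" shows "\<bar>\<phi>' p\<bar> \<le> B * p powr (\<alpha> - 1)"
proof -
  define w where "w x = A / (1 - \<alpha>) * x powr (\<alpha> - 1)" for x
  have dw: "DERIV w x :> - A * x powr (\<alpha> - 2)" if "0 < x" for x
  proof -
    have "DERIV w x :> A / (1 - \<alpha>) * ((\<alpha> - 1) * x powr (\<alpha> - 1 - 1))"
      unfolding w_def by (intro DERIV_cmult has_real_derivative_powr that)
    moreover have "A / (1 - \<alpha>) * ((\<alpha> - 1) * x powr (\<alpha> - 1 - 1)) = - A * x powr (\<alpha> - 2)"
      using alpha by (simp add: field_simps)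
    ultimately show ?thesis by simp
  qed
  have cw: "continuous_on {p..1} w" unfolding w_def using p
    by (intro continuous_intros continuous_on_powr') auto
  have h1: "\<phi>' 1 + w 1 \<le> \<phi>' p + w p"
  proof (rule DERIV_nonpos_imp_decreasing_open[of p 1 "\<lambda>x. \<phi>' x + w x"])
    show "p \<le> 1" using p by simp
    show "continuous_on {p..1} (\<lambda>x. \<phi>' x + w x)" using phi'_cont[OF p(1)] cw by (intro continuous_intros)
    fix x assume x: "p < x" "x < 1"
    have "DERIV (\<lambda>x. \<phi>' x + w x) x :> \<phi>'' x + - A * x powr (\<alpha> - 2)"
      using x p by (intro DERIV_add d2_at dw) auto
    moreover have "\<phi>'' x \<le> A * x powr (\<alpha> - 2)" using b2[rule_format, of x] x p by (simp add: abs_le_iff)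
    ultimately show "\<exists>y. DERIV (\<lambda>x. \<phi>' x + w x) x :> y \<and> y \<le> 0" by force
  qed
  have h2: "\<phi>' p - w p \<le> \<phi>' 1 - w 1"
  proof (rule DERIV_nonneg_imp_increasing_open[of p 1 "\<lambda>x. \<phi>' x - w x"])
    show "p \<le> 1" using p by simp
    show "continuous_on {p..1} (\<lambda>x. \<phi>' x - w x)" using phi'_cont[OF p(1)] cw by (intro continuous_intros)
    fix x assume x: "p < x" "x < 1"
    have "DERIV (\<lambda>x. \<phi>' x - w x) x :> \<phi>'' x - - A * x powr (\<alpha> - 2)"
      using x p by (intro DERIV_diff d2_at dw) auto
    moreover have "- \<phi>'' x \<le> A * x powr (\<alpha> - 2)" using b2[rule_format, of x] x p by (simp add: abs_le_iff)
    ultimately show "\<exists>y. DERIV (\<lambda>x. \<phi>' x - w x) x :> y \<and> 0 \<le> y" by force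
  qed
  have w1: "w 1 \<ge> 0" unfolding w_def using A alpha by simp
  have "\<bar>\<phi>' p\<bar> \<le> \<bar>\<phi>' 1\<bar> + w p" using h1 h2 w1 by linarith
  also have "\<dots> \<le> \<bar>\<phi>' 1\<bar> * p powr (\<alpha> - 1) + w p"
    using powr_ge1[of p "\<alpha> - 1"] p alpha by (simp add: mult_le_cancel_left1)
  also have "\<dots> = B * p powr (\<alpha> - 1)" unfolding w_def B_def by (simp add: algebra_simps)
  finally show ?thesis .
qed

lemma holder_le: assumes xy: "0 \<le> x" "x \<le> y" "y \<le> 1" shows "\<bar>\<phi> y - \<phi> x\<bar> \<le> K * (y - x) powr \<alpha>"
proof -
  define w where "w s = K * s powr \<alpha>" for s
  have cw: "continuous_on {x..y} w" unfolding w_def using alpha xy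
    by (intro continuous_intros continuous_on_powr') auto
  have cphi: "continuous_on {x..y} \<phi>" using cont by (rule continuous_on_subset) (use xy in auto)
  have dw: "DERIV w s :> B * s powr (\<alpha> - 1)" if "0 < s" for s
  proof -
    have "DERIV w s :> K * (\<alpha> * s powr (\<alpha> - 1))"
      unfolding w_def by (intro DERIV_cmult has_real_derivative_powr that)
    then show ?thesis unfolding K_def using alpha by simp
  qed
  have h1: "\<phi> x + w x \<le> \<phi> y + w y"
  proof (rule DERIV_nonneg_imp_increasing_open[of x y "\<lambda>s. \<phi> s + w s"])
    show "x \<le> y" using xy by simp
    show "continuous_on {x..y} (\<lambda>s. \<phi> s + w s)" using cphi cw by (intro continuous_intros)
    fix s assume s: "x < s" "s < y"
    have "DERIV (\<lambda>s. \<phi> s + w s) s :> \<phi>' s + B * s powr (\<alpha> - 1)"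
      using s xy by (intro DERIV_add d1_at dw) auto
    moreover have "- \<phi>' s \<le> B * s powr (\<alpha> - 1)" using phi'_bound[of s] s xy by force
    ultimately show "\<exists>z. DERIV (\<lambda>s. \<phi> s + w s) s :> z \<and> 0 \<le> z" by force
  qed
  have h2: "\<phi> y - w y \<le> \<phi> x - w x"
  proof (rule DERIV_nonpos_imp_decreasing_open[of x y "\<lambda>s. \<phi> s - w s"])
    show "x \<le> y" using xy by simp
    show "continuous_on {x..y} (\<lambda>s. \<phi> s - w s)" using cphi cw by (intro continuous_intros)
    fix s assume s: "x < s" "s < y"
    have "DERIV (\<lambda>s. \<phi> s - w s) s :> \<phi>' s - B * s powr (\<alpha> - 1)"
      using s xy by (intro DERIV_diff d1_at dw) auto
    moreover have "\<phi>' s \<le> B * s powr (\<alpha> - 1)" using phi'_bound[of s] s xy by force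
    ultimately show "\<exists>z. DERIV (\<lambda>s. \<phi> s - w s) s :> z \<and> z \<le> 0" by force
  qed
  have "\<bar>\<phi> y - \<phi> x\<bar> \<le> w y - w x" using h1 h2 by linarith
  also have "w y - w x \<le> K * (y - x) powr \<alpha>"
  proof -
    have "y powr \<alpha> \<le> x powr \<alpha> + (y - x) powr \<alpha>"
      using powr_subadd[of x "y - x" \<alpha>] xy alpha by simp
    then have "K * (y powr \<alpha> - x powr \<alpha>) \<le> K * (y - x) powr \<alpha>"
      using K_pos by (intro mult_left_mono) auto
    moreover have "w y - w x = K * (y powr \<alpha> - x powr \<alpha>)" unfolding w_def by (simp add: right_diff_distrib)
    ultimately show ?thesis by simp
  qed
  finally show ?thesis .
qed

lemma holder: assumes "x \<in> {0..1}" "y \<in> {0..1}" shows "\<bar>\<phi> y - \<phi> x\<bar> \<le> K * \<bar>y - x\<bar> powr \<alpha>"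
proof (cases "x \<le> y")
  case True then show ?thesis using holder_le[of x y] assms by auto
next
  case False then show ?thesis using holder_le[of y x] assms by (auto simp: abs_minus_commute)
qed

end


locale G_setup = phi_setup +
  fixes \<Delta> \<sigma> :: real
  assumes sig: "0 < \<sigma>" "4 * \<sigma> \<le> \<Delta>" "\<Delta> \<le> 1"
begin

definition "y \<theta> = \<sigma> + (\<Delta> - 2*\<sigma>) * (1 - cos \<theta>) / 2"
definition "G \<theta> = \<phi> (y \<theta>)"
definition "G1 \<theta> = \<phi>' (y \<theta>) * ((\<Delta> - 2*\<sigma>) * sin \<theta> / 2)"
definition "G2 \<theta> = \<phi>'' (y \<theta>) * ((\<Delta> - 2*\<sigma>) * sin \<theta> / 2)^2 + \<phi>' (y \<theta>) * ((\<Delta> - 2*\<sigma>) * cos \<theta> / 2)"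
definition "F \<theta> = \<phi> (\<Delta> * (1 - cos \<theta>) / 2)"
definition "M1 = B * \<Delta> * \<sigma> powr (\<alpha> - 1)"
definition "M2 = (A + B) * \<Delta> * \<sigma> powr (\<alpha> - 1)"

lemma M_nonneg: "0 \<le> M1" "0 \<le> M2"
  unfolding M1_def M2_def using B_pos A sig by auto

lemma y_range: "\<sigma> \<le> y \<theta>" "y \<theta> \<le> \<Delta> - \<sigma>"
proof -
  have c: "0 \<le> (1 - cos \<theta>)/2" "(1 - cos \<theta>)/2 \<le> 1" using cos_le_one[of \<theta>] cos_ge_minus_one[of \<theta>] by auto
  have D: "0 \<le> \<Delta> - 2*\<sigma>" using sig by simp
  have "0 \<le> (\<Delta> - 2*\<sigma>) * ((1 - cos \<theta>)/2)" using c D by simp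
  moreover have "(\<Delta> - 2*\<sigma>) * ((1 - cos \<theta>)/2) \<le> (\<Delta> - 2*\<sigma>) * 1" using c D by (intro mult_left_mono) auto
  ultimately show "\<sigma> \<le> y \<theta>" "y \<theta> \<le> \<Delta> - \<sigma>" unfolding y_def by auto
qed

lemma y_in: "0 < y \<theta>" "y \<theta> < 1"
  using y_range[of \<theta>] sig by auto

lemma dy: "DERIV y \<theta> :> (\<Delta> - 2*\<sigma>) * sin \<theta> / 2"
  unfolding y_def[abs_def] by (auto intro!: derivative_eq_intros)

lemma dG: "DERIV G \<theta> :> G1 \<theta>"
proof -
  have "DERIV (\<lambda>\<theta>. \<phi> (y \<theta>)) \<theta> :> \<phi>' (y \<theta>) * ((\<Delta> - 2*\<sigma>) * sin \<theta> / 2)"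
    by (rule DERIV_chain'[OF dy d1_at[OF y_in]])
  then show ?thesis unfolding G_def[abs_def] G1_def by simp
qed

lemma dG1: "DERIV G1 \<theta> :> G2 \<theta>"
proof -
  have a: "DERIV (\<lambda>\<theta>. \<phi>' (y \<theta>)) \<theta> :> \<phi>'' (y \<theta>) * ((\<Delta> - 2*\<sigma>) * sin \<theta> / 2)"
    by (rule DERIV_chain'[OF dy d2_at[OF y_in]])
  have b: "DERIV (\<lambda>\<theta>. (\<Delta> - 2*\<sigma>) * sin \<theta> / 2) \<theta> :> (\<Delta> - 2*\<sigma>) * cos \<theta> / 2"
    by (auto intro!: derivative_eq_intros)
  have "DERIV (\<lambda>\<theta>. \<phi>' (y \<theta>) * ((\<Delta> - 2*\<sigma>) * sin \<theta> / 2)) \<theta> :>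
      \<phi>'' (y \<theta>) * ((\<Delta> - 2*\<sigma>) * sin \<theta> / 2) * ((\<Delta> - 2*\<sigma>) * sin \<theta> / 2) + (\<Delta> - 2*\<sigma>) * cos \<theta> / 2 * \<phi>' (y \<theta>)"
    by (rule DERIV_mult[OF a b])
  then show ?thesis unfolding G1_def[abs_def] G2_def
    by (rule DERIV_cong) (simp add: power2_eq_square ac_simps)
qed

lemma phi'_y: "\<bar>\<phi>' (y \<theta>)\<bar> \<le> B * \<sigma> powr (\<alpha> - 1)"
proof -
  have "\<bar>\<phi>' (y \<theta>)\<bar> \<le> B * y \<theta> powr (\<alpha> - 1)" using phi'_bound y_in by (simp add: less_imp_le)
  also have "\<dots> \<le> B * \<sigma> powr (\<alpha> - 1)"
    using y_range sig alpha B_pos by (intro mult_left_mono powr_mono2') auto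
  finally show ?thesis .
qed

lemma G1_bound: "\<bar>G1 \<theta>\<bar> \<le> M1"
proof -
  have s: "\<bar>(\<Delta> - 2*\<sigma>) * sin \<theta> / 2\<bar> \<le> \<Delta>"
  proof -
    have "\<bar>(\<Delta> - 2*\<sigma>) * sin \<theta> / 2\<bar> = (\<Delta> - 2*\<sigma>) * \<bar>sin \<theta>\<bar> / 2" using sig by (simp add: abs_mult)
    also have "\<dots> \<le> (\<Delta> - 2*\<sigma>) * 1 / 2" using sig abs_sin_le_one[of \<theta>] by (intro divide_right_mono mult_left_mono) auto
    finally show ?thesis using sig by simp
  qed
  have "\<bar>G1 \<theta>\<bar> = \<bar>\<phi>' (y \<theta>)\<bar> * \<bar>(\<Delta> - 2*\<sigma>) * sin \<theta> / 2\<bar>" unfolding G1_def by (simp only: abs_mult)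
  also have "\<dots> \<le> (B * \<sigma> powr (\<alpha> - 1)) * \<Delta>"
    using phi'_y s B_pos by (intro mult_mono) auto
  finally show ?thesis unfolding M1_def by (simp add: algebra_simps)
qed

lemma s2_bound: "((\<Delta> - 2*\<sigma>) * sin \<theta> / 2)^2 \<le> \<Delta> * y \<theta>"
proof -
  define D where "D = \<Delta> - 2*\<sigma>"
  define X where "X = D * (1 - cos \<theta>) / 2"
  define Y where "Y = (1 + cos \<theta>) / 2"
  have D: "0 \<le> D" "D \<le> \<Delta>" unfolding D_def using sig by auto
  have cg: "-1 \<le> cos \<theta>" "cos \<theta> \<le> 1" by simp_all
  have Y1: "0 \<le> Y" unfolding Y_def by (intro divide_nonneg_nonneg) (use cg in linarith, simp)
  have "(1 + cos \<theta>) / 2 \<le> 2 / 2" by (intro divide_right_mono) (use cg in linarith, simp)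
  then have Y2: "Y \<le> 1" unfolding Y_def by simp
  note Y = Y1 Y2
  have X: "0 \<le> X" "X \<le> y \<theta>" unfolding X_def y_def D_def using y_range[of \<theta>] sig cos_le_one[of \<theta>]
    by (auto simp: y_def)
  have "((\<Delta> - 2*\<sigma>) * sin \<theta> / 2)^2 = D * X * Y"
  proof -
    have "sin \<theta> ^ 2 = (1 - cos \<theta>) * (1 + cos \<theta>)" using sin_cos_squared_add[of \<theta>] by (simp add: algebra_simps power2_eq_square)
    note ssq = this
    have "((\<Delta> - 2*\<sigma>) * sin \<theta> / 2)^2 = D^2 * sin \<theta> ^ 2 / 4"
      unfolding D_def by (simp add: power_divide power_mult_distrib)
    also have "\<dots> = D^2 * ((1 - cos \<theta>) * (1 + cos \<theta>)) / 4" using ssq by simp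
    also have "\<dots> = D * X * Y" unfolding X_def Y_def by (simp add: power2_eq_square field_simps)
    finally show ?thesis .
  qed
  also have "\<dots> \<le> D * X * 1" using D X Y by (intro mult_left_mono) auto
  also have "\<dots> \<le> \<Delta> * y \<theta>" using D X by (simp add: mult_mono)
  finally show ?thesis .
qed

lemma G2_bound: "\<bar>G2 \<theta>\<bar> \<le> M2"
proof -
  have y0: "0 < y \<theta>" using y_in by simp
  have a: "\<bar>\<phi>'' (y \<theta>)\<bar> \<le> A * y \<theta> powr (\<alpha> - 2)" using b2 y_in by (simp add: less_imp_le)
  have "\<bar>\<phi>'' (y \<theta>) * ((\<Delta> - 2*\<sigma>) * sin \<theta> / 2)^2\<bar> = \<bar>\<phi>'' (y \<theta>)\<bar> * ((\<Delta> - 2*\<sigma>) * sin \<theta> / 2)^2"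
    by (simp add: abs_mult)
  also have "\<dots> \<le> (A * y \<theta> powr (\<alpha> - 2)) * (\<Delta> * y \<theta>)"
    using a s2_bound by (intro mult_mono) auto
  also have "\<dots> = A * \<Delta> * (y \<theta> * y \<theta> powr (\<alpha> - 2))" by (simp add: algebra_simps)
  also have "y \<theta> * y \<theta> powr (\<alpha> - 2) = y \<theta> powr (\<alpha> - 1)"
    using powr_mult_base[of "y \<theta>" "\<alpha> - 2"] y0 by simp
  also have "A * \<Delta> * y \<theta> powr (\<alpha> - 1) \<le> A * \<Delta> * \<sigma> powr (\<alpha> - 1)"
    using y_range sig alpha A by (intro mult_left_mono powr_mono2') auto
  finally have t1: "\<bar>\<phi>'' (y \<theta>) * ((\<Delta> - 2*\<sigma>) * sin \<theta> / 2)^2\<bar> \<le> A * \<Delta> * \<sigma> powr (\<alpha> - 1)" .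
  have c: "\<bar>(\<Delta> - 2*\<sigma>) * cos \<theta> / 2\<bar> \<le> \<Delta>"
  proof -
    have "\<bar>(\<Delta> - 2*\<sigma>) * cos \<theta> / 2\<bar> = (\<Delta> - 2*\<sigma>) * \<bar>cos \<theta>\<bar> / 2" using sig by (simp add: abs_mult)
    also have "\<dots> \<le> (\<Delta> - 2*\<sigma>) * 1 / 2" using sig abs_cos_le_one[of \<theta>] by (intro divide_right_mono mult_left_mono) auto
    finally show ?thesis using sig by simp
  qed
  have "\<bar>\<phi>' (y \<theta>) * ((\<Delta> - 2*\<sigma>) * cos \<theta> / 2)\<bar> = \<bar>\<phi>' (y \<theta>)\<bar> * \<bar>(\<Delta> - 2*\<sigma>) * cos \<theta> / 2\<bar>"
    by (simp only: abs_mult)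
  also have "\<dots> \<le> (B * \<sigma> powr (\<alpha> - 1)) * \<Delta>" using phi'_y c B_pos by (intro mult_mono) auto
  finally have t2: "\<bar>\<phi>' (y \<theta>) * ((\<Delta> - 2*\<sigma>) * cos \<theta> / 2)\<bar> \<le> B * \<Delta> * \<sigma> powr (\<alpha> - 1)"
    by (simp add: algebra_simps)
  have "\<bar>G2 \<theta>\<bar> \<le> A * \<Delta> * \<sigma> powr (\<alpha> - 1) + B * \<Delta> * \<sigma> powr (\<alpha> - 1)"
    unfolding G2_def using t1 t2 by (rule order_trans[OF abs_triangle_ineq add_mono])
  then show ?thesis unfolding M2_def by (simp add: algebra_simps)
qed

lemma F_G: "\<bar>F \<theta> - G \<theta>\<bar> \<le> K * \<sigma> powr \<alpha>"
proof -
  have x1: "\<Delta> * (1 - cos \<theta>) / 2 \<in> {0..1}"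
  proof -
    have c: "0 \<le> (1 - cos \<theta>)/2" "(1 - cos \<theta>)/2 \<le> 1" using cos_le_one[of \<theta>] cos_ge_minus_one[of \<theta>] by auto
    have "\<Delta> * ((1 - cos \<theta>)/2) \<le> 1 * 1" using c sig by (intro mult_mono) auto
    moreover have "0 \<le> \<Delta> * ((1 - cos \<theta>)/2)" using c sig by simp
    ultimately show ?thesis by simp
  qed
  have y1: "y \<theta> \<in> {0..1}" using y_in by (simp add: less_imp_le)
  have d: "\<bar>\<Delta> * (1 - cos \<theta>) / 2 - y \<theta>\<bar> \<le> \<sigma>"
  proof -
    have "\<Delta> * (1 - cos \<theta>) / 2 - y \<theta> = - (\<sigma> * cos \<theta>)" unfolding y_def by (simp add: field_simps)
    then have "\<bar>\<Delta> * (1 - cos \<theta>) / 2 - y \<theta>\<bar> = \<sigma> * \<bar>cos \<theta>\<bar>" using sig by (simp add: abs_mult)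
    also have "\<dots> \<le> \<sigma> * 1" using sig abs_cos_le_one[of \<theta>] by (intro mult_left_mono) auto
    finally show ?thesis by simp
  qed
  have "\<bar>F \<theta> - G \<theta>\<bar> \<le> K * \<bar>\<Delta> * (1 - cos \<theta>) / 2 - y \<theta>\<bar> powr \<alpha>"
    unfolding F_def G_def using holder[OF y1 x1] .
  also have "\<dots> \<le> K * \<sigma> powr \<alpha>"
    using d alpha K_pos by (intro mult_left_mono powr_mono2) auto
  finally show ?thesis .
qed

lemma main_err: "\<bar>F (\<theta> + u) - F \<theta> - G1 \<theta> * sin u\<bar> \<le> 2 * K * \<sigma> powr \<alpha> + 36 * (M1 + M2) * sin (u/2)^2"
proof -
  obtain u' and k :: int where uk: "\<bar>u'\<bar> \<le> pi" "u = u' + 2 * pi * of_int k" using rep by blast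
  have e1: "F (\<theta> + u) = F (\<theta> + u')" unfolding F_def uk(2)
    using cos_per[of "\<theta> + u'" k] by (simp add: add.assoc)
  have e2: "sin u = sin u'" unfolding uk(2) by (rule sin_per)
  have e3: "sin (u/2)^2 = sin (u'/2)^2" unfolding uk(2) by (rule sin_half_per)
  have t1: "\<bar>F (\<theta> + u') - G (\<theta> + u')\<bar> \<le> K * \<sigma> powr \<alpha>" by (rule F_G)
  have t2: "\<bar>F \<theta> - G \<theta>\<bar> \<le> K * \<sigma> powr \<alpha>" by (rule F_G)
  have t3: "\<bar>G (\<theta> + u') - G \<theta> - G1 \<theta> * u'\<bar> \<le> M2 * u'^2"
    by (rule taylor2[OF dG dG1 G2_bound])
  have t4: "\<bar>G1 \<theta> * (u' - sin u')\<bar> \<le> M1 * u'^2"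
    unfolding abs_mult using G1_bound u_sin[of u'] M_nonneg by (intro mult_mono) auto
  have t5: "u'^2 \<le> 36 * sin (u'/2)^2" by (rule u_sq_sin[OF uk(1)])
  have "\<bar>F (\<theta> + u') - F \<theta> - G1 \<theta> * sin u'\<bar> \<le> 2 * K * \<sigma> powr \<alpha> + (M1 + M2) * u'^2"
  proof -
    have "F (\<theta> + u') - F \<theta> - G1 \<theta> * sin u' = (F (\<theta> + u') - G (\<theta> + u')) - (F \<theta> - G \<theta>)
        + (G (\<theta> + u') - G \<theta> - G1 \<theta> * u') + G1 \<theta> * (u' - sin u')" by (simp add: algebra_simps)
    then show ?thesis using t1 t2 t3 t4 by (simp add: algebra_simps)
  qed
  also have "\<dots> \<le> 2 * K * \<sigma> powr \<alpha> + (M1 + M2) * (36 * sin (u'/2)^2)"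
    using t5 M_nonneg by (intro add_left_mono mult_left_mono) auto
  finally show ?thesis unfolding e1 e2 e3 by (simp add: algebra_simps)
qed

end


lemma Kr_cls: "cls (4*(m-1)) (\<lambda>\<theta>. Kr m (\<theta> - a))"
proof -
  define S1 where "S1 \<theta> = (\<Sum>k<m. cos (real k * (\<theta> - a)))" for \<theta>
  define S2 where "S2 \<theta> = (\<Sum>k<m. sin (real k * (\<theta> - a)))" for \<theta>
  have c1: "cls (m-1) S1" unfolding S1_def[abs_def]
    by (intro cls_sum) (auto intro: cls_mono[OF cls_cos_shift])
  have c2: "cls (m-1) S2" unfolding S2_def[abs_def]
    by (intro cls_sum) (auto intro: cls_mono[OF cls_sin_shift])
  have X: "cls ((m-1)+(m-1)) (\<lambda>\<theta>. S1 \<theta> * S1 \<theta> + S2 \<theta> * S2 \<theta>)"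
    using cls_add[OF cls_mult[OF c1 c1] cls_mult[OF c2 c2]] .
  have Y: "cls (((m-1)+(m-1)) + ((m-1)+(m-1))) (\<lambda>\<theta>. (S1 \<theta> * S1 \<theta> + S2 \<theta> * S2 \<theta>) * (S1 \<theta> * S1 \<theta> + S2 \<theta> * S2 \<theta>))"
    using cls_mult[OF X X] .
  have e: "(\<lambda>\<theta>. Kr m (\<theta> - a)) = (\<lambda>\<theta>. (S1 \<theta> * S1 \<theta> + S2 \<theta> * S2 \<theta>) * (S1 \<theta> * S1 \<theta> + S2 \<theta> * S2 \<theta>))"
    by (rule ext) (simp add: Kr_poly_form S1_def S2_def power2_eq_square)
  show ?thesis unfolding e by (rule cls_mono[OF Y]) simp
qed

context G_setup begin

lemma approx_J:
  assumes m: "0 < m" and sdef: "\<Delta> = 4 * real m ^ 2 * \<sigma>"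
  shows "\<exists>P. degree P \<le> 4*(m-1) \<and> (\<forall>\<theta>. \<bar>poly P (cos \<theta>) - F \<theta>\<bar> \<le> (2*K + 576*(A + 2*B)) * \<sigma> powr \<alpha>)"
proof -
  define N where "N = 4*m"
  have N: "2*m \<le> N" "m \<le> N" "0 < N" using m N_def by auto
  define T where "T = (\<Sum>j<N. Kr m (0 - tn N j))"
  have hT: "(\<Sum>j<N. Kr m (\<theta> - tn N j)) = T" for \<theta>
    unfolding T_def by (simp only: sum_Kr[OF m N(1)])
  have T4: "real m ^ 4 \<le> T"
  proof -
    have "Kr m (0 - tn N 0) \<le> T" unfolding T_def
      by (rule member_le_sum) (use N Kr_nonneg in auto)
    then show ?thesis by (simp add: tn_def Kr_zero)
  qed
  have Tpos: "0 < T" using T4 m by (meson less_le_trans of_nat_0_less_iff zero_less_power)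
  define J where "J \<theta> = (\<Sum>j<N. (F (tn N j) / T) * Kr m (\<theta> - tn N j))" for \<theta>
  have Jc: "cls (4*(m-1)) J" unfolding J_def[abs_def]
    by (intro cls_sum cls_scale Kr_cls) auto
  define E0 where "E0 = 2 * K * \<sigma> powr \<alpha>"
  define E1 where "E1 = 36 * (M1 + M2)"
  have E1: "0 \<le> E1" unfolding E1_def using M_nonneg by simp
  have err: "\<bar>J \<theta> - F \<theta>\<bar> \<le> E0 + E1 * (real N * real m) / T" for \<theta>
  proof -
    define a where "a = G1 \<theta>"
    have s0: "(\<Sum>j<N. Kr m (\<theta> - tn N j) * sin (\<theta> - tn N j)) = 0" by (rule sum_Kr_sin[OF m N(1)])
    define X where "X j = F (tn N j) - F \<theta> - a * sin (tn N j - \<theta>)" for j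
    have t: "Kr m (\<theta> - tn N j) * X j = Kr m (\<theta> - tn N j) * F (tn N j) - F \<theta> * Kr m (\<theta> - tn N j)
        + a * (Kr m (\<theta> - tn N j) * sin (\<theta> - tn N j))" for j
    proof -
      have "sin (tn N j - \<theta>) = - sin (\<theta> - tn N j)" by (metis minus_diff_eq sin_minus)
      then show ?thesis unfolding X_def by (simp add: algebra_simps)
    qed
    have "(\<Sum>j<N. Kr m (\<theta> - tn N j) * X j) = (\<Sum>j<N. Kr m (\<theta> - tn N j) * F (tn N j)) - F \<theta> * T"
      unfolding t by (simp add: sum.distrib sum_subtractf sum_distrib_left[symmetric] s0 hT)
    moreover have "J \<theta> = (\<Sum>j<N. Kr m (\<theta> - tn N j) * F (tn N j)) / T"
      unfolding J_def by (simp add: sum_divide_distrib mult.commute)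
    ultimately have JF: "J \<theta> - F \<theta> = (\<Sum>j<N. Kr m (\<theta> - tn N j) * X j) / T"
      using Tpos by (simp add: field_simps)
    have tb: "\<bar>Kr m (\<theta> - tn N j) * X j\<bar> \<le> Kr m (\<theta> - tn N j) * E0 + E1 * cmod (Dk m (\<theta> - tn N j)) ^ 2" for j
    proof -
      have "\<bar>X j\<bar> \<le> E0 + E1 * sin ((tn N j - \<theta>)/2)^2"
        using main_err[of \<theta> "tn N j - \<theta>"] unfolding X_def E0_def E1_def a_def by simp
      moreover have "sin ((tn N j - \<theta>)/2)^2 = sin ((\<theta> - tn N j)/2)^2"
        by (metis minus_diff_eq sin_minus power2_minus minus_divide_left)
      ultimately have "\<bar>X j\<bar> \<le> E0 + E1 * sin ((\<theta> - tn N j)/2)^2" by simp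
      then have "\<bar>Kr m (\<theta> - tn N j) * X j\<bar> \<le> Kr m (\<theta> - tn N j) * (E0 + E1 * sin ((\<theta> - tn N j)/2)^2)"
        unfolding abs_mult abs_of_nonneg[OF Kr_nonneg] by (rule mult_left_mono) (rule Kr_nonneg)
      also have "\<dots> = Kr m (\<theta> - tn N j) * E0 + E1 * (Kr m (\<theta> - tn N j) * sin ((\<theta> - tn N j)/2)^2)"
        by (simp add: algebra_simps)
      also have "\<dots> \<le> Kr m (\<theta> - tn N j) * E0 + E1 * cmod (Dk m (\<theta> - tn N j)) ^ 2"
        using Kr_sin E1 by (intro add_left_mono mult_left_mono) auto
      finally show ?thesis .
    qed
    have "\<bar>\<Sum>j<N. Kr m (\<theta> - tn N j) * X j\<bar> \<le> (\<Sum>j<N. Kr m (\<theta> - tn N j) * E0 + E1 * cmod (Dk m (\<theta> - tn N j)) ^ 2)"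
      by (rule order_trans[OF sum_abs sum_mono]) (use tb in auto)
    also have "\<dots> = T * E0 + E1 * (real N * real m)"
      by (simp add: sum.distrib sum_distrib_left[symmetric] sum_distrib_right[symmetric] hT sum_D2[OF m N(2)])
    finally have "\<bar>J \<theta> - F \<theta>\<bar> \<le> (T * E0 + E1 * (real N * real m)) / T"
      unfolding JF abs_divide using Tpos by (simp add: divide_right_mono)
    also have "\<dots> = E0 + E1 * (real N * real m) / T" using Tpos by (simp add: field_simps)
    finally show ?thesis .
  qed
  have bnd: "E0 + E1 * (real N * real m) / T \<le> (2*K + 576*(A + 2*B)) * \<sigma> powr \<alpha>"
  proof -
    have m0: "0 < real m" using m by simp
    have "E1 * (real N * real m) / T \<le> E1 * (real N * real m) / real m ^ 4"
      by (intro divide_left_mono mult_nonneg_nonneg mult_pos_pos zero_less_power) (use T4 E1 m0 Tpos in auto)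
    also have "\<dots> = 576 * (A + 2*B) * (\<sigma> * \<sigma> powr (\<alpha> - 1))"
      unfolding E1_def M1_def M2_def N_def using m0 by (simp add: sdef field_simps power2_eq_square power4_eq_xxxx)
    also have "\<sigma> * \<sigma> powr (\<alpha> - 1) = \<sigma> powr \<alpha>" using powr_mult_base[of \<sigma> "\<alpha> - 1"] sig by simp
    finally show ?thesis unfolding E0_def by (simp add: algebra_simps)
  qed
  obtain P Q where PQ: "degree P \<le> 4*(m-1)" "\<forall>t. J t = poly P (cos t) + sin t * poly Q (cos t)"
    using Jc unfolding cls_def by blast
  have "\<bar>poly P (cos \<theta>) - F \<theta>\<bar> \<le> (2*K + 576*(A + 2*B)) * \<sigma> powr \<alpha>" for \<theta>
  proof -
    have "poly P (cos \<theta>) - F \<theta> = ((J \<theta> - F \<theta>) + (J (-\<theta>) - F (-\<theta>))) / 2"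
      using PQ(2) by (simp add: F_def)
    moreover have "\<bar>J \<theta> - F \<theta>\<bar> \<le> (2*K + 576*(A + 2*B)) * \<sigma> powr \<alpha>" using err bnd order_trans by blast
    moreover have "\<bar>J (-\<theta>) - F (-\<theta>)\<bar> \<le> (2*K + 576*(A + 2*B)) * \<sigma> powr \<alpha>" using err bnd order_trans by blast
    ultimately show ?thesis by simp
  qed
  then show ?thesis using PQ(1) by blast
qed

end


lemma bae_le:
  fixes \<phi> :: "real \<Rightarrow> real" and q :: "real poly"
  assumes c: "continuous_on {0..\<Delta>} \<phi>" and D: "0 \<le> \<Delta>" and dq: "degree q \<le> L"
    and b: "\<forall>x\<in>{0..\<Delta>}. \<bar>\<phi> x - poly q x\<bar> \<le> E"
  shows "best_approx_err L \<phi> {0..\<Delta>} \<le> E"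
proof -
  have bdd: "bdd_above ((\<lambda>x. \<bar>\<phi> x - poly q' x\<bar>) ` {0..\<Delta>})" for q' :: "real poly"
  proof -
    have "continuous_on {0..\<Delta>} (\<lambda>x. \<bar>\<phi> x - poly q' x\<bar>)" using c by (intro continuous_intros)
    then have "compact ((\<lambda>x. \<bar>\<phi> x - poly q' x\<bar>) ` {0..\<Delta>})" by (rule compact_continuous_image) simp
    then show ?thesis by (intro bounded_imp_bdd_above compact_imp_bounded)
  qed
  have nn: "0 \<le> (SUP x\<in>{0..\<Delta>}. \<bar>\<phi> x - poly q' x\<bar>)" for q' :: "real poly"
  proof -
    have "\<bar>\<phi> 0 - poly q' 0\<bar> \<le> (SUP x\<in>{0..\<Delta>}. \<bar>\<phi> x - poly q' x\<bar>)"
      by (rule cSUP_upper[OF _ bdd]) (use D in auto)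
    then show ?thesis by (meson abs_ge_zero order_trans)
  qed
  have bb: "bdd_below ((\<lambda>q. SUP x\<in>{0..\<Delta>}. \<bar>\<phi> x - poly q x\<bar>) ` {q. degree q \<le> L})"
    by (rule bdd_belowI2[where m = 0]) (rule nn)
  have "best_approx_err L \<phi> {0..\<Delta>} \<le> (SUP x\<in>{0..\<Delta>}. \<bar>\<phi> x - poly q x\<bar>)"
    unfolding best_approx_err_def by (rule cINF_lower[OF bb]) (use dq in simp)
  also have "\<dots> \<le> E" by (rule cSUP_least) (use b D in auto)
  finally show ?thesis .
qed

theorem lemma8:
  fixes \<alpha> W c c' :: real and \<phi> \<phi>' \<phi>'' :: "real \<Rightarrow> real"
  assumes alpha: "0 < \<alpha>" "\<alpha> < 1"
    and W: "W > 0"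
    and nonneg: "\<forall>p\<in>{0..1}. \<phi> p \<ge> 0"
    and cont: "continuous_on {0..1} \<phi>"
    and d1: "\<forall>p\<in>{0<..1}. (\<phi> has_real_derivative \<phi>' p) (at p within {0<..1})"
    and d2: "\<forall>p\<in>{0<..1}. (\<phi>' has_real_derivative \<phi>'' p) (at p within {0<..1})"
    and c2: "continuous_on {0<..1} \<phi>''"
    and bounds: "\<forall>p\<in>{0<..1}. (2 - \<alpha>) * W * p powr (\<alpha> - 2) + c' \<le> \<bar>\<phi>'' p\<bar>
                          \<and> \<bar>\<phi>'' p\<bar> \<le> (2 - \<alpha>) * W * p powr (\<alpha> - 2) + c"
  shows "\<exists>C>0. \<forall>\<Delta>\<in>{0<..1}. \<forall>L::nat. L \<ge> 1 \<longrightarrow>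
           best_approx_err L \<phi> {0..\<Delta>} \<le> C * (\<Delta> / (real L)^2) powr \<alpha>"
proof -
  define A where "A = (2 - \<alpha>) * W + \<bar>c\<bar>"
  have Apos: "A > 0" using W alpha by (simp add: A_def add_pos_nonneg)
  have b2: "\<forall>p\<in>{0<..1}. \<bar>\<phi>'' p\<bar> \<le> A * p powr (\<alpha> - 2)"
  proof
    fix p :: real assume p: "p \<in> {0<..1}"
    have "p powr 0 \<le> p powr (\<alpha> - 2)" using powr_mono'[of "\<alpha> - 2" 0 p] p alpha by simp
    then have "1 \<le> p powr (\<alpha> - 2)" using p by simp
    then have "\<bar>c\<bar> * 1 \<le> \<bar>c\<bar> * p powr (\<alpha> - 2)" by (intro mult_left_mono) auto
    then have "c \<le> \<bar>c\<bar> * p powr (\<alpha> - 2)" by linarith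
    moreover have bp: "\<bar>\<phi>'' p\<bar> \<le> (2 - \<alpha>) * W * p powr (\<alpha> - 2) + c" using bounds p by blast
    moreover have "A * p powr (\<alpha> - 2) = (2 - \<alpha>) * W * p powr (\<alpha> - 2) + \<bar>c\<bar> * p powr (\<alpha> - 2)"
      unfolding A_def by (simp add: distrib_right)
    ultimately show "\<bar>\<phi>'' p\<bar> \<le> A * p powr (\<alpha> - 2)" by linarith
  qed
  interpret P: phi_setup \<alpha> A \<phi> \<phi>' \<phi>'' using alpha Apos cont d1 d2 b2 by unfold_locales auto
  define C1 where "C1 = 2 * P.K + 576 * (A + 2 * P.B)"
  have C1: "0 < C1" using P.K_pos P.B_pos Apos by (simp add: C1_def)
  define C where "C = max (9 * P.K) (13 * C1)"
  have Cpos: "0 < C" using C1 unfolding C_def by simp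
  show ?thesis
  proof (intro exI[of _ C] conjI ballI allI impI)
    show "0 < C" by (rule Cpos)
    fix \<Delta> :: real and L :: nat assume \<Delta>: "\<Delta> \<in> {0<..1}" and L: "1 \<le> L"
    have D0: "0 < \<Delta>" "\<Delta> \<le> 1" using \<Delta> by auto
    have Lpos: "0 < real L" using L by simp
    have c\<phi>: "continuous_on {0..\<Delta>} \<phi>" using cont by (rule continuous_on_subset) (use D0 in auto)
    define R where "R = (\<Delta> / (real L)^2) powr \<alpha>"
    have R0: "0 \<le> R" unfolding R_def by simp
    show "best_approx_err L \<phi> {0..\<Delta>} \<le> C * (\<Delta> / (real L)^2) powr \<alpha>"
      unfolding R_def[symmetric]
    proof (cases "L \<le> 3")
      case True
      have B1: "best_approx_err L \<phi> {0..\<Delta>} \<le> P.K * \<Delta> powr \<alpha>"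
      proof (rule bae_le[OF c\<phi>, of "[:\<phi> 0:]"])
        show "0 \<le> \<Delta>" using D0 by simp
        show "degree [:\<phi> 0:] \<le> L" by simp
        show "\<forall>x\<in>{0..\<Delta>}. \<bar>\<phi> x - poly [:\<phi> 0:] x\<bar> \<le> P.K * \<Delta> powr \<alpha>"
        proof
          fix x assume x: "x \<in> {0..\<Delta>}"
          have "\<bar>\<phi> x - \<phi> 0\<bar> \<le> P.K * \<bar>x - 0\<bar> powr \<alpha>" by (rule P.holder) (use x D0 in auto)
          also have "\<dots> \<le> P.K * \<Delta> powr \<alpha>"
            using x alpha P.K_pos by (intro mult_left_mono powr_mono2) auto
          finally show "\<bar>\<phi> x - poly [:\<phi> 0:] x\<bar> \<le> P.K * \<Delta> powr \<alpha>" by simp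
        qed
      qed
      have D9: "\<Delta> powr \<alpha> \<le> 9 * R"
      proof -
        have L2: "1 \<le> (real L)^2" using L by simp
        have e: "\<Delta> powr \<alpha> = R * ((real L)^2) powr \<alpha>" unfolding R_def using D0 Lpos
          by (simp add: powr_divide)
        have "((real L)^2) powr \<alpha> \<le> ((real L)^2) powr 1" using L2 alpha by (intro powr_mono) auto
        also have "\<dots> \<le> 9"
        proof -
          have "real L \<le> 3" using True by simp
          then have "(real L)^2 \<le> 3^2" using Lpos by (intro power_mono) auto
          then show ?thesis using L2 by simp
        qed
        finally have l1: "((real L)^2) powr \<alpha> \<le> 9" .
        have "R * ((real L)^2) powr \<alpha> \<le> R * 9" by (rule mult_left_mono[OF l1 R0])
        then show ?thesis using e by simp
      qed
      have "P.K * \<Delta> powr \<alpha> \<le> P.K * (9 * R)" using D9 P.K_pos by (intro mult_left_mono) auto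
      also have "\<dots> \<le> C * R"
      proof -
        have "9 * P.K \<le> C" unfolding C_def by simp
        then have "(9 * P.K) * R \<le> C * R" using R0 by (rule mult_right_mono)
        then show ?thesis by (simp add: algebra_simps)
      qed
      finally show "best_approx_err L \<phi> {0..\<Delta>} \<le> C * R" using B1 by simp
    next
      case False
      define m where "m = L div 4"
      have mn: "0 < m" "4 * (m - 1) \<le> L" "L \<le> 7 * m" using False unfolding m_def by presburger+
      have m7: "real L \<le> 7 * real m" using mn(3) by (metis of_nat_le_iff of_nat_mult of_nat_numeral)
      define \<sigma> where "\<sigma> = \<Delta> / (4 * real m^2)"
      have mpos: "0 < real m" using mn by simp
      have \<sigma>: "0 < \<sigma>" "4 * \<sigma> \<le> \<Delta>" "\<Delta> = 4 * real m^2 * \<sigma>"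
      proof -
        show "0 < \<sigma>" unfolding \<sigma>_def using D0 mpos by simp
        have "1 \<le> real m ^ 2" using mn by simp
        then show "4 * \<sigma> \<le> \<Delta>" unfolding \<sigma>_def using D0 by (simp add: divide_le_eq mult_le_cancel_left1 field_simps)
        show "\<Delta> = 4 * real m^2 * \<sigma>" unfolding \<sigma>_def using mpos by simp
      qed
      interpret G: G_setup \<alpha> A \<phi> \<phi>' \<phi>'' \<Delta> \<sigma> using \<sigma> D0 by unfold_locales auto
      obtain Pp where Pp: "degree Pp \<le> 4*(m-1)" "\<forall>\<theta>. \<bar>poly Pp (cos \<theta>) - G.F \<theta>\<bar> \<le> C1 * \<sigma> powr \<alpha>"
        using G.approx_J[OF mn(1) \<sigma>(3)] unfolding C1_def by blast
      define q where "q = pcompose Pp [:1, -2/\<Delta>:]"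
      have dq: "degree q \<le> L"
      proof -
        have "degree q \<le> degree Pp * degree [:1, -2/\<Delta>:]" unfolding q_def by (rule degree_pcompose_le)
        also have "\<dots> \<le> degree Pp * 1" by (intro mult_left_mono) auto
        finally show ?thesis using Pp(1) mn(2) by simp
      qed
      have approx: "\<forall>x\<in>{0..\<Delta>}. \<bar>\<phi> x - poly q x\<bar> \<le> C1 * \<sigma> powr \<alpha>"
      proof
        fix x assume x: "x \<in> {0..\<Delta>}"
        define cc where "cc = 1 - 2*x/\<Delta>"
        have cc: "-1 \<le> cc" "cc \<le> 1" unfolding cc_def using x D0 by (auto simp: field_simps)
        have "cos (arccos cc) = cc" using cc by simp
        then have "G.F (arccos cc) = \<phi> (\<Delta> * (1 - cc) / 2)" unfolding G.F_def by simp
        moreover have "\<Delta> * (1 - cc) / 2 = x" unfolding cc_def using D0 by (simp add: field_simps)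
        ultimately have "G.F (arccos cc) = \<phi> x" by simp
        moreover have "poly q x = poly Pp cc" unfolding q_def cc_def by (simp add: poly_pcompose algebra_simps)
        moreover have "\<bar>poly Pp (cos (arccos cc)) - G.F (arccos cc)\<bar> \<le> C1 * \<sigma> powr \<alpha>" using Pp(2) by blast
        ultimately show "\<bar>\<phi> x - poly q x\<bar> \<le> C1 * \<sigma> powr \<alpha>" using \<open>cos (arccos cc) = cc\<close>
          by (simp add: abs_minus_commute)
      qed
      have B1: "best_approx_err L \<phi> {0..\<Delta>} \<le> C1 * \<sigma> powr \<alpha>"
        by (rule bae_le[OF c\<phi> _ dq approx]) (use D0 in auto)
      have S13: "\<sigma> powr \<alpha> \<le> 13 * R"
      proof -
        have "\<sigma> \<le> 13 * (\<Delta> / (real L)^2)"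
        proof -
          have "(real L)^2 \<le> (7 * real m)^2" using m7 Lpos by (intro power_mono) auto
          then have "(real L)^2 \<le> 49 * real m ^ 2" by (simp add: power_mult_distrib)
          then have "(real L)^2 \<le> 52 * real m ^ 2" using zero_le_power2[of "real m"] by linarith
          then have "\<Delta> * (real L)^2 \<le> \<Delta> * (52 * real m ^ 2)" using D0 by (intro mult_left_mono) auto
          then have "\<Delta> * (real L)^2 \<le> 52 * (\<Delta> * real m ^ 2)" by (simp add: algebra_simps)
          then show ?thesis unfolding \<sigma>_def using Lpos mpos by (simp add: field_simps)
        qed
        then have "\<sigma> powr \<alpha> \<le> (13 * (\<Delta> / (real L)^2)) powr \<alpha>" using \<sigma> alpha by (intro powr_mono2) auto
        also have "\<dots> = 13 powr \<alpha> * R" unfolding R_def by (rule powr_mult; use D0 in simp)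
        also have "13 powr \<alpha> * R \<le> 13 * R"
        proof -
          have "13 powr \<alpha> \<le> 13 powr (1::real)" using alpha by (intro powr_mono) auto
          then show ?thesis using R0 by (simp add: mult_right_mono)
        qed
        finally show ?thesis .
      qed
      have "C1 * \<sigma> powr \<alpha> \<le> C1 * (13 * R)" using S13 C1 by (intro mult_left_mono) auto
      also have "\<dots> \<le> C * R"
      proof -
        have "13 * C1 \<le> C" unfolding C_def by simp
        then have "(13 * C1) * R \<le> C * R" using R0 by (rule mult_right_mono)
        then show ?thesis by (simp add: algebra_simps)
      qed
      finally show "best_approx_err L \<phi> {0..\<Delta>} \<le> C * R" using B1 by simp
    qed
  qed
qed


end
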